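(* For every $d \geq 1$ and $\varepsilon \leq \frac{1}{2}$, every algorithm for robust mean estimation of $d$-dimensional distributions with covariance $\Sigma \preceq \sigma^2 I$ in the population limit has, on some input, error \[ \mathbb{E}[\|\widehat{\mu} - \mu\|] \geq JUNG_d \cdot (1 + O(\varepsilon)) \cdot \sqrt{2\sigma^2\varepsilon}, \] where the $O(\cdot)$ hides an absolute constant (i.e. the bound is at least $JUNG_d(1-c\varepsilon)\sqrt{2\sigma^2\varepsilon}$ for an absolute constant $c$).
   Context: $JUNG_d := \sqrt{\frac{2d}{d+1}}$. Robust mean estimation in the population limit: there is an unknown true distribution $D$ on $\mathbb{R}^d$ with mean $\mu$ and covariance $\Sigma \preceq \sigma^2 I$; an adversary replaces it by any distribution $D'$ with total variation distance $TV(D, D') \leq \varepsilon$. The (possibly randomized) algorithm is given $\varepsilon$, $\sigma^2$ and the distribution $D'$ itself (not samples), and outputs $\widehat{\mu} \in \mathbb{R}^d$; its error is $\mathbb{E}\|\widehat{\mu} - \mu\|$, the expectation over the algorithm's randomness. "On some input" means there exist $\sigma$, such a $D$ and such a $D'$ for which the stated lower bound holds. *)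

theory Defs
  imports "HOL-Probability.Probability"
begin

text \<open>Points of R^d are represented as extensional functions on the index set {..<d}
  (elements of PiE {..<d} (\<lambda>_. UNIV)); the Borel sigma-algebra of R^d is the
  product sigma-algebra.\<close>

definition Rd :: "nat \<Rightarrow> (nat \<Rightarrow> real) measure" where
  "Rd d = PiM {..<d} (\<lambda>_. (borel :: real measure))"

definition distr_on :: "nat \<Rightarrow> (nat \<Rightarrow> real) measure \<Rightarrow> bool" where
  "distr_on d M \<longleftrightarrow> prob_space M \<and> sets M = sets (Rd d)"

definition vdist :: "nat \<Rightarrow> (nat \<Rightarrow> real) \<Rightarrow> (nat \<Rightarrow> real) \<Rightarrow> real" where
  "vdist d x y = sqrt (\<Sum>i<d. (x i - y i)\<^sup>2)"

definition finite_second_moments :: "nat \<Rightarrow> (nat \<Rightarrow> real) measure \<Rightarrow> bool" where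
  "finite_second_moments d M \<longleftrightarrow> (\<forall>i<d. integrable M (\<lambda>x. (x i)\<^sup>2))"

definition mean :: "nat \<Rightarrow> (nat \<Rightarrow> real) measure \<Rightarrow> (nat \<Rightarrow> real)" where
  "mean d M = (\<lambda>i\<in>{..<d}. \<integral>x. x i \<partial>M)"

definition cov :: "nat \<Rightarrow> (nat \<Rightarrow> real) measure \<Rightarrow> nat \<Rightarrow> nat \<Rightarrow> real" where
  "cov d M i j = (\<integral>x. (x i - mean d M i) * (x j - mean d M j) \<partial>M)"

definition cov_le :: "nat \<Rightarrow> (nat \<Rightarrow> real) measure \<Rightarrow> real \<Rightarrow> bool" where
  "cov_le d M s \<longleftrightarrow>
     (\<forall>v :: nat \<Rightarrow> real. (\<Sum>i<d. \<Sum>j<d. v i * cov d M i j * v j) \<le> s * (\<Sum>i<d. (v i)\<^sup>2))"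

definition tv :: "'a measure \<Rightarrow> 'a measure \<Rightarrow> real" where
  "tv M N = (SUP A \<in> sets M. \<bar>measure M A - measure N A\<bar>)"

definition jung :: "nat \<Rightarrow> real" where
  "jung d = sqrt (2 * real d / (real d + 1))"

end

theory Submission
  imports Defs
begin

definition wts :: "nat \<Rightarrow> real \<Rightarrow> nat \<Rightarrow> real" where
  "wts m e a = (if a = 0 then 1 - real (m+1) * e else if a \<le> Suc m then e else 0)"

lemma wts_nonneg: "0 \<le> e \<Longrightarrow> real (m+1) * e \<le> 1 \<Longrightarrow> 0 \<le> wts m e a"
  by (auto simp: wts_def)

lemma wts_sum: "(\<Sum>a\<le>Suc m. wts m e a) = 1"
  by (simp add: sum.atMost_Suc_shift wts_def del: sum.atMost_Suc)

definition qq :: "nat \<Rightarrow> real \<Rightarrow> nat pmf" where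
  "qq m e = embed_pmf (wts m e)"

lemma pmf_qq:
  assumes "0 \<le> e" "real (m+1) * e \<le> 1"
  shows "pmf (qq m e) a = wts m e a"
  unfolding qq_def
proof (rule pmf_embed_pmf)
  show "\<And>x. 0 \<le> wts m e x" using wts_nonneg[OF assms] .
  have "(\<integral>\<^sup>+ x. ennreal (wts m e x) \<partial>count_space UNIV) = (\<Sum>x\<le>Suc m. ennreal (wts m e x))"
    by (rule nn_integral_count_space') (auto simp: wts_def)
  also have "\<dots> = ennreal (\<Sum>x\<le>Suc m. wts m e x)"
    by (rule sum_ennreal) (rule wts_nonneg[OF assms])
  finally show "(\<integral>\<^sup>+ x. ennreal (wts m e x) \<partial>count_space UNIV) = 1"
    by (simp only: wts_sum ennreal_1)
qed

lemma set_qq: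
  assumes "0 \<le> e" "real (m+1) * e \<le> 1"
  shows "set_pmf (qq m e) \<subseteq> {..Suc m}"
  using pmf_qq[OF assms] by (auto simp: set_pmf_iff wts_def split: if_splits)

lemma space_Rd: "space (Rd d) = PiE {..<d} (\<lambda>_. UNIV)"
  by (simp add: Rd_def space_PiM)

lemma meas_f:
  assumes "\<And>a. f a \<in> space (Rd d)"
  shows "f \<in> measurable (measure_pmf q) (Rd d)"
  unfolding measurable_pmf_measure1 using assms by blast

lemma distr_on_pmf:
  assumes "\<And>a. f a \<in> space (Rd d)"
  shows "distr_on d (distr (measure_pmf q) (Rd d) f)"
proof -
  have "f \<in> measurable (measure_pmf q) (Rd d)" by (rule meas_f) (rule assms)
  then show ?thesis unfolding distr_on_def by (auto intro!: measure_pmf.prob_space_distr)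
qed

lemma comp_meas[measurable]: "i < d \<Longrightarrow> (\<lambda>x. x i) \<in> borel_measurable (Rd d)"
  unfolding Rd_def by measurable

lemma integral_pmf_distr:
  assumes "\<And>a. f a \<in> space (Rd d)" "g \<in> borel_measurable (Rd d)"
    "finite A" "set_pmf q \<subseteq> A"
  shows "integral\<^sup>L (distr (measure_pmf q) (Rd d) f) g = (\<Sum>a\<in>A. g (f a) * pmf q a)"
  apply (subst integral_distr[OF meas_f[OF assms(1)] assms(2)])
  apply (rule integral_measure_pmf_real)
  using assms by auto

lemma fsm_pmf:
  assumes "\<And>a. f a \<in> space (Rd d)" "finite (set_pmf q)"
  shows "finite_second_moments d (distr (measure_pmf q) (Rd d) f)"
  unfolding finite_second_moments_def
proof (intro allI impI)
  fix i assume i: "i < d"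
  show "integrable (distr (measure_pmf q) (Rd d) f) (\<lambda>x. (x i)\<^sup>2)"
    apply (subst integrable_distr_eq[OF meas_f[OF assms(1)]])
    using i apply measurable
    using assms(2) by (rule integrable_measure_pmf_finite)
qed

definition uu :: "nat \<Rightarrow> real" where "uu m = - 1 / sqrt (real m + 1)"
definition tt :: "nat \<Rightarrow> real" where "tt m = (1 + uu m) / real m"
definition sv :: "nat \<Rightarrow> nat \<Rightarrow> nat \<Rightarrow> real" where
  "sv m k i = (if i < m then (if k < m then (if i = k then 1 else 0) - tt m else uu m) else 0)"

lemma uu_sq: "(uu m)\<^sup>2 = 1 / (real m + 1)"
  by (simp add: uu_def power_divide)

lemma key_id:
  assumes "m \<ge> 1"
  shows "real m * (tt m)\<^sup>2 - 2 * tt m + (uu m)\<^sup>2 = 0"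
proof -
  have m: "real m > 0" using assms by simp
  have "real m * (tt m)\<^sup>2 - 2 * tt m + (uu m)\<^sup>2
      = ((1 + uu m)\<^sup>2 - 2 * (1 + uu m) + real m * (uu m)\<^sup>2) / real m"
    using m by (simp add: tt_def field_simps power2_eq_square)
  also have "(1 + uu m)\<^sup>2 - 2 * (1 + uu m) + real m * (uu m)\<^sup>2 = (real m + 1) * (uu m)\<^sup>2 - 1"
    by (simp add: algebra_simps power2_eq_square)
  also have "\<dots> = 0" by (simp add: uu_sq)
  finally show ?thesis by simp
qed

lemma sv_sum: "m \<ge> 1 \<Longrightarrow> (\<Sum>k\<le>m. sv m k i) = 0"
proof -
  assume m: "m \<ge> 1"
  show ?thesis
  proof (cases "i < m")
    case True
    have "(\<Sum>k\<le>m. sv m k i) = (\<Sum>k<m. (if i = k then 1 else 0) - tt m) + uu m"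
      by (simp add: lessThan_Suc_atMost[symmetric] sv_def True)
    also have "\<dots> = 1 - real m * tt m + uu m"
      using True by (simp add: sum_subtractf)
    also have "\<dots> = 0" using m by (simp add: tt_def)
    finally show ?thesis .
  qed (simp add: sv_def)
qed

lemma sv_norm:
  assumes "m \<ge> 1" "k \<le> m"
  shows "(\<Sum>i<m. (sv m k i)\<^sup>2) = real m / (real m + 1)"
proof (cases "k < m")
  case True
  have "(\<Sum>i<m. (sv m k i)\<^sup>2) = (\<Sum>i<m. (if i = k then 1 - 2 * tt m else 0) + (tt m)\<^sup>2)"
    by (rule sum.cong) (auto simp: sv_def True power2_eq_square algebra_simps)
  also have "\<dots> = 1 - 2 * tt m + real m * (tt m)\<^sup>2"
    using True by (simp add: sum.distrib)
  also have "\<dots> = 1 - (uu m)\<^sup>2" using key_id[OF assms(1)] by simp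
  also have "\<dots> = real m / (real m + 1)" by (simp add: uu_sq field_simps)
  finally show ?thesis .
next
  case False
  then have k: "k = m" using assms by simp
  have "(\<Sum>i<m. (sv m k i)\<^sup>2) = real m * (uu m)\<^sup>2"
    by (simp add: sv_def k)
  also have "\<dots> = real m / (real m + 1)" by (simp add: uu_sq)
  finally show ?thesis .
qed

lemma sv_frame:
  assumes "m \<ge> 1"
  shows "(\<Sum>k\<le>m. (\<Sum>i<m. v i * sv m k i)\<^sup>2) = (\<Sum>i<m. (v i)\<^sup>2)"
proof -
  define S where "S = (\<Sum>i<m. v i)"
  have lt: "(\<Sum>i<m. v i * sv m k i) = v k - tt m * S" if "k < m" for k
  proof -
    have "(\<Sum>i<m. v i * sv m k i) = (\<Sum>i<m. (if i = k then v i else 0) - tt m * v i)"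
      by (rule sum.cong) (auto simp: sv_def that algebra_simps)
    also have "\<dots> = v k - tt m * S"
      using that by (simp add: sum_subtractf S_def sum_distrib_left)
    finally show ?thesis .
  qed
  have eq: "(\<Sum>i<m. v i * sv m m i) = uu m * S"
    by (simp add: sv_def S_def sum_distrib_left mult.commute)
  have "(\<Sum>k\<le>m. (\<Sum>i<m. v i * sv m k i)\<^sup>2) = (\<Sum>k<m. (v k - tt m * S)\<^sup>2) + (uu m * S)\<^sup>2"
    by (simp add: lessThan_Suc_atMost[symmetric] lt eq)
  also have "(\<Sum>k<m. (v k - tt m * S)\<^sup>2) = (\<Sum>k<m. (v k)\<^sup>2) - 2 * tt m * S * S + real m * (tt m)\<^sup>2 * S\<^sup>2"
  proof -
    have "(\<Sum>k<m. (v k - tt m * S)\<^sup>2) = (\<Sum>k<m. (v k)\<^sup>2 - 2 * tt m * S * v k + (tt m)\<^sup>2 * S\<^sup>2)"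
      by (rule sum.cong) (auto simp: power2_diff power_mult_distrib algebra_simps)
    also have "\<dots> = (\<Sum>k<m. (v k)\<^sup>2) - 2 * tt m * S * (\<Sum>k<m. v k) + real m * (tt m)\<^sup>2 * S\<^sup>2"
      by (simp add: sum.distrib sum_subtractf sum_distrib_left)
    finally show ?thesis by (simp add: S_def)
  qed
  finally have "(\<Sum>k\<le>m. (\<Sum>i<m. v i * sv m k i)\<^sup>2)
     = (\<Sum>k<m. (v k)\<^sup>2) + S\<^sup>2 * (real m * (tt m)\<^sup>2 - 2 * tt m + (uu m)\<^sup>2)"
    by (simp add: algebra_simps power2_eq_square)
  then show ?thesis using key_id[OF assms] by simp
qed

lemma quad_var:
  fixes w :: "'a \<Rightarrow> real" and p :: "'a \<Rightarrow> nat \<Rightarrow> real"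
  assumes "finite A" "(\<Sum>a\<in>A. w a) = 1"
    and mu: "\<And>i. i < d \<Longrightarrow> \<mu> i = (\<Sum>a\<in>A. p a i * w a)"
  shows "(\<Sum>i<d. \<Sum>j<d. v i * (\<Sum>a\<in>A. (p a i - \<mu> i) * (p a j - \<mu> j) * w a) * v j)
     \<le> (\<Sum>a\<in>A. w a * (\<Sum>i<d. v i * p a i)\<^sup>2)"
proof -
  define P where "P a = (\<Sum>i<d. v i * p a i)" for a
  define c where "c = (\<Sum>i<d. v i * \<mu> i)"
  define X where "X a i = v i * (p a i - \<mu> i)" for a i
  have lin: "(\<Sum>i<d. X a i) = P a - c" for a
    by (simp add: X_def P_def c_def right_diff_distrib sum_subtractf)
  have "(\<Sum>i<d. \<Sum>j<d. v i * (\<Sum>a\<in>A. (p a i - \<mu> i) * (p a j - \<mu> j) * w a) * v j)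
      = (\<Sum>i<d. \<Sum>j<d. \<Sum>a\<in>A. w a * (X a i * X a j))"
  proof (intro sum.cong refl)
    fix i j
    have "v i * (\<Sum>a\<in>A. (p a i - \<mu> i) * (p a j - \<mu> j) * w a) * v j
       = (\<Sum>a\<in>A. v i * ((p a i - \<mu> i) * (p a j - \<mu> j) * w a) * v j)"
      by (simp only: sum_distrib_left sum_distrib_right)
    also have "\<dots> = (\<Sum>a\<in>A. w a * (X a i * X a j))"
      by (intro sum.cong refl) (simp add: X_def)
    finally show "v i * (\<Sum>a\<in>A. (p a i - \<mu> i) * (p a j - \<mu> j) * w a) * v j = (\<Sum>a\<in>A. w a * (X a i * X a j))" .
  qed
  also have "\<dots> = (\<Sum>a\<in>A. \<Sum>i<d. \<Sum>j<d. w a * (X a i * X a j))"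
  proof -
    have "(\<Sum>i<d. \<Sum>j<d. \<Sum>a\<in>A. w a * (X a i * X a j)) = (\<Sum>i<d. \<Sum>a\<in>A. \<Sum>j<d. w a * (X a i * X a j))"
      by (rule sum.cong[OF refl], rule sum.swap)
    also have "\<dots> = (\<Sum>a\<in>A. \<Sum>i<d. \<Sum>j<d. w a * (X a i * X a j))"
      by (rule sum.swap)
    finally show ?thesis .
  qed
  also have "\<dots> = (\<Sum>a\<in>A. w a * (P a - c)\<^sup>2)"
  proof (intro sum.cong refl)
    fix a
    have "(\<Sum>i<d. \<Sum>j<d. w a * (X a i * X a j)) = w a * ((\<Sum>i<d. X a i) * (\<Sum>j<d. X a j))"
      unfolding sum_product by (simp only: sum_distrib_left)
    then show "(\<Sum>i<d. \<Sum>j<d. w a * (X a i * X a j)) = w a * (P a - c)\<^sup>2"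
      by (simp only: lin power2_eq_square)
  qed
  also have "\<dots> = (\<Sum>a\<in>A. w a * (P a)\<^sup>2 - 2 * c * (w a * P a) + c\<^sup>2 * w a)"
    by (intro sum.cong refl) (simp add: power2_diff algebra_simps)
  also have "\<dots> = (\<Sum>a\<in>A. w a * (P a)\<^sup>2) - 2 * c * (\<Sum>a\<in>A. w a * P a) + c\<^sup>2 * (\<Sum>a\<in>A. w a)"
    by (simp only: sum.distrib sum_subtractf sum_distrib_left)
  also have "(\<Sum>a\<in>A. w a * P a) = c"
  proof -
    have "(\<Sum>a\<in>A. w a * P a) = (\<Sum>a\<in>A. \<Sum>i<d. v i * (p a i * w a))"
      by (intro sum.cong refl) (simp add: P_def sum_distrib_left mult.commute mult.left_commute)
    also have "\<dots> = (\<Sum>i<d. \<Sum>a\<in>A. v i * (p a i * w a))"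
      by (rule sum.swap)
    also have "\<dots> = (\<Sum>i<d. v i * (\<Sum>a\<in>A. p a i * w a))"
      by (simp only: sum_distrib_left)
    also have "\<dots> = c" by (simp add: c_def mu)
    finally show ?thesis .
  qed
  finally have "(\<Sum>i<d. \<Sum>j<d. v i * (\<Sum>a\<in>A. (p a i - \<mu> i) * (p a j - \<mu> j) * w a) * v j)
     = (\<Sum>a\<in>A. w a * (P a)\<^sup>2) - c\<^sup>2" using assms(2) by (simp add: power2_eq_square)
  also have "\<dots> \<le> (\<Sum>a\<in>A. w a * (P a)\<^sup>2)" by simp
  finally show ?thesis unfolding P_def .
qed

definition P0 :: "nat \<Rightarrow> nat \<Rightarrow> nat \<Rightarrow> nat \<Rightarrow> real" where
  "P0 d m a = (\<lambda>i\<in>{..<d}. if a = 0 then 0 else - sv m (a - 1) i)"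
definition Pk :: "nat \<Rightarrow> nat \<Rightarrow> nat \<Rightarrow> nat \<Rightarrow> nat \<Rightarrow> real" where
  "Pk d m k a = (if a = Suc k then (\<lambda>i\<in>{..<d}. sv m k i) else P0 d m a)"

definition DD0 where "DD0 d m e = distr (measure_pmf (qq m e)) (Rd d) (P0 d m)"
definition DDk where "DDk d m e k = distr (measure_pmf (qq m e)) (Rd d) (Pk d m k)"

lemma P0_space: "P0 d m a \<in> space (Rd d)"
  by (simp add: space_Rd P0_def)
lemma Pk_space: "Pk d m k a \<in> space (Rd d)"
  by (simp add: space_Rd Pk_def P0_def)

lemma sum_sign: "k \<le> (m::nat) \<Longrightarrow> (\<Sum>j\<le>m. (if j = k then x j else - x j)) = 2 * x k - (\<Sum>j\<le>m. x j :: real)"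
proof -
  assume k: "k \<le> m"
  have "(\<Sum>j\<le>m. (if j = k then x j else - x j)) = (\<Sum>j\<le>m. (if j = k then 2 * x j else 0) - x j)"
    by (rule sum.cong) auto
  also have "\<dots> = (\<Sum>j\<le>m. (if j = k then 2 * x j else 0)) - (\<Sum>j\<le>m. x j)"
    by (simp add: sum_subtractf)
  also have "(\<Sum>j\<le>m. (if j = k then 2 * x j else 0)) = 2 * x k"
    using k by (simp add: sum.If_cases)
  finally show ?thesis .
qed

context
  fixes d m :: nat and e :: real
  assumes m1: "1 \<le> m" and md: "m \<le> d" and e0: "0 < e" and me: "real (m+1) * e \<le> 1"
begin

lemma pmfq: "pmf (qq m e) a = wts m e a"
  using pmf_qq e0 me by simp

lemma setq: "set_pmf (qq m e) \<subseteq> {..Suc m}"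
  using set_qq e0 me by simp

lemma int_k:
  assumes "g \<in> borel_measurable (Rd d)"
  shows "integral\<^sup>L (DDk d m e k) g = (\<Sum>a\<le>Suc m. g (Pk d m k a) * wts m e a)"
  unfolding DDk_def
  by (subst integral_pmf_distr[OF Pk_space assms _ setq]) (auto simp: pmfq)

lemma mean_sum: "i < d \<Longrightarrow> mean d (DDk d m e k) i = (\<Sum>a\<le>Suc m. Pk d m k a i * wts m e a)"
proof -
  assume i: "i < d"
  have "mean d (DDk d m e k) i = integral\<^sup>L (DDk d m e k) (\<lambda>x. x i)"
    using i by (simp add: mean_def)
  also have "\<dots> = (\<Sum>a\<le>Suc m. Pk d m k a i * wts m e a)"
    by (rule int_k) (rule comp_meas[OF i])
  finally show ?thesis .
qed

lemma mean_k:
  assumes "k \<le> m" "i < d"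
  shows "mean d (DDk d m e k) i = 2 * e * sv m k i"
proof -
  have "mean d (DDk d m e k) i = (\<Sum>a\<le>Suc m. Pk d m k a i * wts m e a)"
    using assms(2) by (rule mean_sum)
  also have "\<dots> = (\<Sum>j\<le>m. (if j = k then sv m j i else - sv m j i) * e)"
  proof -
    have h0: "Pk d m k 0 i * wts m e 0 = 0" using assms(2) by (simp add: Pk_def P0_def)
    have hs: "\<And>j. j \<in> {..m} \<Longrightarrow> Pk d m k (Suc j) i * wts m e (Suc j)
        = (if j = k then sv m j i else - sv m j i) * e"
      using assms by (auto simp: Pk_def P0_def wts_def)
    show ?thesis by (simp only: sum.atMost_Suc_shift h0 add_0_left) (rule sum.cong[OF refl hs])
  qed
  also have "\<dots> = (\<Sum>j\<le>m. (if j = k then sv m j i else - sv m j i)) * e"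
    by (simp only: sum_distrib_right)
  also have "\<dots> = 2 * e * sv m k i"
    using assms m1 by (simp add: sum_sign sv_sum)
  finally show ?thesis .
qed


lemma meas_cov: "i < d \<Longrightarrow> j < d \<Longrightarrow> (\<lambda>x. (x i - a) * (x j - b)) \<in> borel_measurable (Rd d)"
  by (intro borel_measurable_times borel_measurable_diff comp_meas borel_measurable_const)

lemma cov_k: "i < d \<Longrightarrow> j < d \<Longrightarrow> cov d (DDk d m e k) i j =
   (\<Sum>a\<le>Suc m. (Pk d m k a i - mean d (DDk d m e k) i) * (Pk d m k a j - mean d (DDk d m e k) j) * wts m e a)"
  unfolding cov_def by (rule int_k) (rule meas_cov)

lemma sv_d: "(\<Sum>i<d. f i * sv m j i) = (\<Sum>i<m. f i * sv m j i)"
  by (rule sum.mono_neutral_right) (use md in \<open>auto simp: sv_def\<close>)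

lemma cov_le_k:
  assumes k: "k \<le> m"
  shows "cov_le d (DDk d m e k) e"
  unfolding cov_le_def
proof
  fix v :: "nat \<Rightarrow> real"
  let ?M = "DDk d m e k"
  have "(\<Sum>i<d. \<Sum>j<d. v i * cov d ?M i j * v j)
     = (\<Sum>i<d. \<Sum>j<d. v i * (\<Sum>a\<le>Suc m. (Pk d m k a i - mean d ?M i) * (Pk d m k a j - mean d ?M j) * wts m e a) * v j)"
    by (intro sum.cong refl) (simp add: cov_k)
  also have "\<dots> \<le> (\<Sum>a\<le>Suc m. wts m e a * (\<Sum>i<d. v i * Pk d m k a i)\<^sup>2)"
    by (rule quad_var) (auto simp: wts_sum mean_sum simp del: sum.atMost_Suc)
  also have "\<dots> = e * (\<Sum>j\<le>m. (\<Sum>i<m. v i * sv m j i)\<^sup>2)"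
  proof -
    have z: "(\<Sum>i<d. v i * Pk d m k 0 i) = 0" by (simp add: Pk_def P0_def)
    have s: "(\<Sum>i<d. v i * Pk d m k (Suc j) i)\<^sup>2 = (\<Sum>i<m. v i * sv m j i)\<^sup>2" for j
    proof (cases "j = k")
      case True
      have "(\<Sum>i<d. v i * Pk d m k (Suc j) i) = (\<Sum>i<d. v i * sv m j i)"
        by (intro sum.cong refl) (simp add: Pk_def True)
      then show ?thesis by (simp only: sv_d)
    next
      case False
      have "(\<Sum>i<d. v i * Pk d m k (Suc j) i) = (\<Sum>i<d. - (v i * sv m j i))"
        by (intro sum.cong refl) (simp add: Pk_def P0_def False)
      also have "\<dots> = - (\<Sum>i<d. v i * sv m j i)" by (rule sum_negf)
      finally have "(\<Sum>i<d. v i * Pk d m k (Suc j) i) = - (\<Sum>i<d. v i * sv m j i)" .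
      then show ?thesis by (simp only: sv_d power2_minus)
    qed
    have ws: "\<And>j. j \<in> {..m} \<Longrightarrow> wts m e (Suc j) * (\<Sum>i<d. v i * Pk d m k (Suc j) i)\<^sup>2
        = e * (\<Sum>i<m. v i * sv m j i)\<^sup>2"
      by (simp only: s) (simp add: wts_def)
    have "(\<Sum>a\<le>Suc m. wts m e a * (\<Sum>i<d. v i * Pk d m k a i)\<^sup>2)
        = wts m e 0 * (\<Sum>i<d. v i * Pk d m k 0 i)\<^sup>2 + (\<Sum>j\<le>m. wts m e (Suc j) * (\<Sum>i<d. v i * Pk d m k (Suc j) i)\<^sup>2)"
      by (rule sum.atMost_Suc_shift)
    also have "\<dots> = (\<Sum>j\<le>m. e * (\<Sum>i<m. v i * sv m j i)\<^sup>2)"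
      by (simp only: z zero_power2 mult_zero_right add_0_left) (rule sum.cong[OF refl ws])
    also have "\<dots> = e * (\<Sum>j\<le>m. (\<Sum>i<m. v i * sv m j i)\<^sup>2)"
      by (simp only: sum_distrib_left)
    finally show ?thesis .
  qed
  also have "\<dots> = e * (\<Sum>i<m. (v i)\<^sup>2)" using sv_frame[OF m1, of v] by simp
  also have "\<dots> \<le> e * (\<Sum>i<d. (v i)\<^sup>2)"
    using e0 md by (intro mult_left_mono sum_mono2) auto
  finally show "(\<Sum>i<d. \<Sum>j<d. v i * cov d ?M i j * v j) \<le> e * (\<Sum>i<d. (v i)\<^sup>2)" .
qed

end

lemma pmf_diff_bound:
  assumes "X - {a} = Y - {a}"
  shows "\<bar>measure (measure_pmf q) X - measure (measure_pmf q) Y\<bar> \<le> pmf q a"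
proof -
  have u: "measure (measure_pmf q) Z \<le> measure (measure_pmf q) (Z - {a}) + pmf q a" for Z
  proof -
    have "measure (measure_pmf q) Z \<le> measure (measure_pmf q) ((Z - {a}) \<union> {a})"
      by (rule measure_pmf.finite_measure_mono) auto
    also have "\<dots> \<le> measure (measure_pmf q) (Z - {a}) + measure (measure_pmf q) {a}"
      by (rule measure_Un_le) auto
    finally show ?thesis by (simp add: measure_pmf_single)
  qed
  have l: "measure (measure_pmf q) (Z - {a}) \<le> measure (measure_pmf q) Z" for Z
    by (rule measure_pmf.finite_measure_mono) auto
  show ?thesis using u[of X] u[of Y] l[of X] l[of Y] assms by auto
qed

context
  fixes d m :: nat and e :: real
  assumes m1: "1 \<le> m" and md: "m \<le> d" and e0: "0 < e" and me: "real (m+1) * e \<le> 1"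
begin

lemma tv_k: "tv (DDk d m e k) (DD0 d m e) \<le> e"
  unfolding tv_def
proof (rule cSUP_least)
  show "sets (DDk d m e k) \<noteq> {}" by auto
  fix S assume "S \<in> sets (DDk d m e k)"
  then have S: "S \<in> sets (Rd d)" by (simp add: DDk_def)
  have "measure (DDk d m e k) S = measure (measure_pmf (qq m e)) (Pk d m k -` S)"
    unfolding DDk_def by (subst measure_distr[OF meas_f[OF Pk_space] S]) simp
  moreover have "measure (DD0 d m e) S = measure (measure_pmf (qq m e)) (P0 d m -` S)"
    unfolding DD0_def by (subst measure_distr[OF meas_f[OF P0_space] S]) simp
  moreover have "\<bar>measure (measure_pmf (qq m e)) (Pk d m k -` S) - measure (measure_pmf (qq m e)) (P0 d m -` S)\<bar>
      \<le> pmf (qq m e) (Suc k)"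
    by (rule pmf_diff_bound) (auto simp: Pk_def)
  moreover have "pmf (qq m e) (Suc k) \<le> e"
    using pmf_qq[of e m] e0 me by (simp add: wts_def)
  ultimately show "\<bar>measure (DDk d m e k) S - measure (DD0 d m e) S\<bar> \<le> e" by simp
qed

lemma distr_k: "distr_on d (DDk d m e k)"
  unfolding DDk_def by (rule distr_on_pmf) (rule Pk_space)

lemma distr_0: "distr_on d (DD0 d m e)"
  unfolding DD0_def by (rule distr_on_pmf) (rule P0_space)

lemma fsm_k: "finite_second_moments d (DDk d m e k)"
  unfolding DDk_def
proof (rule fsm_pmf)
  show "finite (set_pmf (qq m e))" using set_qq[of e m] e0 me by (auto intro: finite_subset)
qed (rule Pk_space)

end

context
  fixes d m :: nat and e :: real
  assumes m1: "1 \<le> m" and md: "m \<le> d" and e0: "0 < e" and me: "real (m+1) * e \<le> 1"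
begin

lemma sv_sq_d: "k \<le> m \<Longrightarrow> (\<Sum>i<d. (sv m k i)\<^sup>2) = real m / (real m + 1)"
proof -
  assume k: "k \<le> m"
  have "(\<Sum>i<d. (sv m k i)\<^sup>2) = (\<Sum>i<d. sv m k i * sv m k i)" by (simp add: power2_eq_square)
  also have "\<dots> = (\<Sum>i<m. sv m k i * sv m k i)" using sv_d[OF m1 md e0 me] .
  also have "\<dots> = real m / (real m + 1)" using sv_norm[OF m1 k] by (simp add: power2_eq_square)
  finally show ?thesis .
qed

lemma pointwise:
  defines "\<rho> \<equiv> 2 * e * sqrt (real m / (real m + 1))"
  shows "real (m+1) * \<rho> \<le> (\<Sum>k\<le>m. vdist d y (mean d (DDk d m e k)))"
proof -
  have rho_pos: "\<rho> > 0" using e0 m1 by (simp add: \<rho>_def)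
  define mu where "mu k i = 2 * e * sv m k i" for k i
  have vd: "vdist d y (mean d (DDk d m e k)) = L2_set (\<lambda>i. mu k i - y i) {..<d}" if "k \<le> m" for k
    unfolding vdist_def L2_set_def
    by (intro arg_cong[where f=sqrt] sum.cong refl)
      (simp add: mean_k[OF m1 md e0 me that] mu_def power2_commute)
  have nmu: "L2_set (mu k) {..<d} = \<rho>" if "k \<le> m" for k
  proof -
    have "(\<Sum>i<d. (mu k i)\<^sup>2) = (2 * e)\<^sup>2 * (\<Sum>i<d. (sv m k i)\<^sup>2)"
      by (simp add: mu_def power_mult_distrib sum_distrib_left)
    also have "\<dots> = (2 * e)\<^sup>2 * (real m / (real m + 1))" by (simp add: sv_sq_d that)
    finally have "L2_set (mu k) {..<d} = sqrt ((2 * e)\<^sup>2) * sqrt (real m / (real m + 1))"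
      unfolding L2_set_def by (simp only: real_sqrt_mult)
    moreover have "sqrt ((2 * e)\<^sup>2) = 2 * e" using e0 by (simp only: real_sqrt_abs)
    ultimately show ?thesis by (simp only: \<rho>_def)
  qed
  have each: "\<rho>\<^sup>2 - (\<Sum>i<d. y i * mu k i) \<le> \<rho> * vdist d y (mean d (DDk d m e k))" if "k \<le> m" for k
  proof -
    have "(\<Sum>i<d. (mu k i)\<^sup>2) = \<rho>\<^sup>2"
      using nmu[OF that] unfolding L2_set_def using rho_pos
      by (metis real_sqrt_ge_0_iff real_sqrt_pow2 zero_le_power2 sum_nonneg)
    then have "\<rho>\<^sup>2 - (\<Sum>i<d. y i * mu k i) = (\<Sum>i<d. (mu k i - y i) * mu k i)"
      by (simp add: algebra_simps power2_eq_square sum_subtractf)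
    also have "\<dots> \<le> (\<Sum>i<d. \<bar>mu k i - y i\<bar> * \<bar>mu k i\<bar>)"
      by (intro sum_mono) (metis abs_ge_self abs_mult)
    also have "\<dots> \<le> L2_set (\<lambda>i. mu k i - y i) {..<d} * L2_set (mu k) {..<d}"
      by (rule L2_set_mult_ineq)
    also have "\<dots> = \<rho> * vdist d y (mean d (DDk d m e k))"
      by (simp add: vd[OF that] nmu[OF that])
    finally show ?thesis .
  qed
  have "(\<Sum>k\<le>m. \<rho>\<^sup>2 - (\<Sum>i<d. y i * mu k i)) \<le> (\<Sum>k\<le>m. \<rho> * vdist d y (mean d (DDk d m e k)))"
    by (rule sum_mono) (rule each, simp)
  moreover have "(\<Sum>k\<le>m. \<rho>\<^sup>2 - (\<Sum>i<d. y i * mu k i)) = real (m+1) * \<rho>\<^sup>2"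
  proof -
    have "(\<Sum>k\<le>m. \<Sum>i<d. y i * mu k i) = (\<Sum>i<d. y i * (2 * e) * (\<Sum>k\<le>m. sv m k i))"
      by (simp add: mu_def sum.swap[of _ "{..m}"] sum_distrib_left mult.assoc)
    also have "\<dots> = 0" by (simp add: sv_sum[OF m1])
    finally show ?thesis by (simp add: sum_subtractf)
  qed
  ultimately have "real (m+1) * \<rho>\<^sup>2 \<le> \<rho> * (\<Sum>k\<le>m. vdist d y (mean d (DDk d m e k)))"
    by (simp add: sum_distrib_left)
  then show ?thesis using rho_pos by (simp add: power2_eq_square mult.commute mult.left_commute)
qed

end

lemma real_part:
  fixes d m :: nat and e :: real
  assumes e0: "0 < e" and eh: "e \<le> 1/2"
    and ratio: "real d / (real d + 1) * (1 - 2 * e)\<^sup>2 \<le> real m / (real m + 1)"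
  shows "jung d * (1 - 2 * e) * sqrt (2 * (sqrt e)\<^sup>2 * e) \<le> 2 * e * sqrt (real m / (real m + 1))"
proof -
  have a: "1 - 2 * e = sqrt ((1 - 2 * e)\<^sup>2)" using eh by simp
  have b: "sqrt ((2 * e)\<^sup>2) = 2 * e" using e0 by (intro real_sqrt_unique) auto
  have "jung d * (1 - 2 * e) * sqrt (2 * (sqrt e)\<^sup>2 * e)
      = sqrt (2 * real d / (real d + 1)) * sqrt ((1 - 2 * e)\<^sup>2) * sqrt (2 * e * e)"
    using e0 a by (simp add: jung_def)
  also have "\<dots> = sqrt (2 * real d / (real d + 1) * (1 - 2 * e)\<^sup>2 * (2 * e * e))"
    by (simp only: real_sqrt_mult)
  also have "\<dots> = sqrt ((2 * e)\<^sup>2 * (real d / (real d + 1) * (1 - 2 * e)\<^sup>2))"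
    by (rule arg_cong[where f=sqrt]) (simp add: power2_eq_square)
  also have "\<dots> \<le> sqrt ((2 * e)\<^sup>2 * (real m / (real m + 1)))"
    by (intro real_sqrt_le_mono mult_left_mono ratio) simp
  also have "\<dots> = 2 * e * sqrt (real m / (real m + 1))"
    by (simp only: real_sqrt_mult b)
  finally show ?thesis .
qed

lemma choose_m:
  fixes d :: nat and e :: real
  assumes d1: "1 \<le> d" and e0: "0 < e" and eh: "e \<le> 1/2"
  defines "m \<equiv> min d (nat \<lfloor>1/e\<rfloor> - 1)"
  shows "1 \<le> m" "m \<le> d" "real (m+1) * e \<le> 1"
    "real d / (real d + 1) * (1 - 2 * e)\<^sup>2 \<le> real m / (real m + 1)"
proof -
  define N where "N = nat \<lfloor>1/e\<rfloor>"
  have inv2: "2 \<le> 1/e" using e0 eh by (simp add: field_simps)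
  have fl2: "2 \<le> \<lfloor>1/e\<rfloor>" using inv2 by (simp add: le_floor_iff)
  have Nint: "real N = real_of_int \<lfloor>1/e\<rfloor>" unfolding N_def using fl2 by (intro of_nat_nat) linarith
  have "real N \<ge> 2" using Nint fl2 by linarith
  then have N2: "2 \<le> N" by simp
  have NL: "real N \<le> 1/e" using Nint floor_correct[of "1/e"] by linarith
  have NG: "1/e - 1 < real N" using Nint floor_correct[of "1/e"] by simp
  have mN: "m = min d (N - 1)" by (simp add: m_def N_def)
  show "1 \<le> m" using d1 N2 mN by simp
  show "m \<le> d" using mN by simp
  have "m + 1 \<le> N" using mN N2 by simp
  then have "real (m+1) \<le> 1/e" using NL by (meson of_nat_le_iff order_trans)
  then show "real (m+1) * e \<le> 1" using e0 by (simp add: field_simps)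
  have q01: "(1 - 2 * e)\<^sup>2 \<le> 1 - 2 * e" using e0 eh by (simp add: power2_eq_square mult_left_le)
  have dd: "real d / (real d + 1) \<le> 1" by simp
  have lhs: "real d / (real d + 1) * (1 - 2 * e)\<^sup>2 \<le> (1 - 2 * e)\<^sup>2"
    using dd by (intro mult_left_le_one_le) auto
  show "real d / (real d + 1) * (1 - 2 * e)\<^sup>2 \<le> real m / (real m + 1)"
  proof (cases "m = d")
    case True
    have "(1 - 2 * e)\<^sup>2 \<le> 1" using q01 e0 by simp
    then show ?thesis using True mult_left_le[of "(1 - 2 * e)\<^sup>2" "real d / (real d + 1)"] by simp
  next
    case False
    then have m: "m = N - 1" using mN by simp
    then have mr: "real m + 1 = real N" using N2 by simp
    have "1 / real N \<le> 2 * e"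
    proof -
      have "1 / (2 * e) \<le> 1 / e - 1" using e0 eh by (simp add: field_simps)
      then have "1 / (2 * e) \<le> real N" using NG by simp
      then show ?thesis using e0 N2 by (simp add: field_simps)
    qed
    then have "1 - 2 * e \<le> real m / (real m + 1)"
      using mr N2 by (simp add: field_simps)
    then show ?thesis using lhs q01 by linarith
  qed
qed

lemma vdist_meas: "(\<lambda>y. vdist d y z) \<in> borel_measurable (Rd d)"
  unfolding vdist_def
proof -
  have "(\<lambda>y. \<Sum>i<d. (y i - z i)\<^sup>2) \<in> borel_measurable (Rd d)"
    by (intro borel_measurable_sum borel_measurable_power
      borel_measurable_diff comp_meas borel_measurable_const) auto
  then show "(\<lambda>y. sqrt (\<Sum>i<d. (y i - z i)\<^sup>2)) \<in> borel_measurable (Rd d)"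
    using measurable_compose borel_measurable_sqrt by blast
qed

theorem theorem2:
  shows "\<exists>c::real. \<forall>d::nat. \<forall>\<epsilon>::real.
    d \<ge> 1 \<longrightarrow> 0 < \<epsilon> \<longrightarrow> \<epsilon> \<le> 1/2 \<longrightarrow>
    (\<forall>A :: real \<Rightarrow> real \<Rightarrow> (nat \<Rightarrow> real) measure \<Rightarrow> (nat \<Rightarrow> real) measure.
      (\<forall>e s D'. distr_on d D' \<longrightarrow> distr_on d (A e s D')) \<longrightarrow>
      (\<exists>\<sigma>::real. \<exists>D D'. \<sigma> > 0 \<and>
         distr_on d D \<and> finite_second_moments d D \<and> cov_le d D (\<sigma>\<^sup>2) \<and>
         distr_on d D' \<and> tv D D' \<le> \<epsilon> \<and>
         (\<integral>\<^sup>+ y. ennreal (vdist d y (mean d D)) \<partial>(A \<epsilon> (\<sigma>\<^sup>2) D'))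
           \<ge> ennreal (jung d * (1 - c * \<epsilon>) * sqrt (2 * \<sigma>\<^sup>2 * \<epsilon>))))"
proof (rule exI[of _ 2], intro allI impI)
  fix d :: nat and e :: real and A :: "real \<Rightarrow> real \<Rightarrow> (nat \<Rightarrow> real) measure \<Rightarrow> (nat \<Rightarrow> real) measure"
  assume d1: "1 \<le> d" and e0: "0 < e" and eh: "e \<le> 1/2"
    and HA: "\<forall>e s D'. distr_on d D' \<longrightarrow> distr_on d (A e s D')"
  define m where "m = min d (nat \<lfloor>1/e\<rfloor> - 1)"
  have m1: "1 \<le> m" and md: "m \<le> d" and me: "real (m+1) * e \<le> 1"
    and ratio: "real d / (real d + 1) * (1 - 2 * e)\<^sup>2 \<le> real m / (real m + 1)"
    using choose_m[OF d1 e0 eh] by (simp_all add: m_def)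
  define \<rho> where "\<rho> = 2 * e * sqrt (real m / (real m + 1))"
  have rho0: "0 \<le> \<rho>" using e0 by (simp add: \<rho>_def)
  define Out where "Out = A e ((sqrt e)\<^sup>2) (DD0 d m e)"
  have dO: "distr_on d Out" unfolding Out_def using HA distr_0[OF m1 md e0 me] by blast
  then have pO: "prob_space Out" and sO: "sets Out = sets (Rd d)" by (auto simp: distr_on_def)
  define F where "F k = (\<integral>\<^sup>+ y. ennreal (vdist d y (mean d (DDk d m e k))) \<partial>Out)" for k
  have meas: "(\<lambda>y. ennreal (vdist d y z)) \<in> borel_measurable Out" for z
  proof -
    have "(\<lambda>y. vdist d y z) \<in> borel_measurable Out"
      using vdist_meas measurable_cong_sets[OF sO refl] by blast
    then show ?thesis by simp
  qed
  have sumF: "ennreal (real (m+1) * \<rho>) \<le> (\<Sum>k\<le>m. F k)"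
  proof -
    have "ennreal (real (m+1) * \<rho>) = (\<integral>\<^sup>+ y. ennreal (real (m+1) * \<rho>) \<partial>Out)"
      using prob_space.emeasure_space_1[OF pO] by simp
    also have "\<dots> \<le> (\<integral>\<^sup>+ y. (\<Sum>k\<le>m. ennreal (vdist d y (mean d (DDk d m e k)))) \<partial>Out)"
    proof (rule nn_integral_mono)
      fix y
      have "(\<Sum>k\<le>m. ennreal (vdist d y (mean d (DDk d m e k))))
          = ennreal (\<Sum>k\<le>m. vdist d y (mean d (DDk d m e k)))"
        by (rule sum_ennreal) (simp add: vdist_def sum_nonneg)
      then show "ennreal (real (m+1) * \<rho>) \<le> (\<Sum>k\<le>m. ennreal (vdist d y (mean d (DDk d m e k))))"
        using pointwise[OF m1 md e0 me, of y] by (simp add: \<rho>_def ennreal_leI)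
    qed
    also have "\<dots> = (\<Sum>k\<le>m. F k)"
      unfolding F_def by (rule nn_integral_sum) (rule meas)
    finally show ?thesis .
  qed
  obtain k where k: "k \<le> m" and kmax: "\<And>j. j \<le> m \<Longrightarrow> F j \<le> F k"
  proof -
    have "Max (F ` {..m}) \<in> F ` {..m}" by (intro Max_in) auto
    then obtain k where "Max (F ` {..m}) = F k" "k \<in> {..m}" by (rule imageE)
    then have "k \<le> m" "F k = Max (F ` {..m})" by auto
    moreover have "\<And>j. j \<le> m \<Longrightarrow> F j \<le> Max (F ` {..m})" by (intro Max_ge) auto
    ultimately show ?thesis using that by metis
  qed
  have bnd: "(\<Sum>j\<le>m. F j) \<le> of_nat (card {..m}) * F k"
    by (rule sum_bounded_above) (simp add: kmax)
  have c: "(of_nat (card {..m}) :: ennreal) = ennreal (real (m+1))"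
    by (simp only: card_atMost ennreal_of_nat_eq_real_of_nat Suc_eq_plus1)
  have ee: "ennreal (real (m+1) * \<rho>) = ennreal (real (m+1)) * ennreal \<rho>"
    using rho0 by (intro ennreal_mult) simp_all
  have "ennreal (real (m+1)) * ennreal \<rho> \<le> ennreal (real (m+1)) * F k"
    using order_trans[OF sumF bnd] by (simp only: c ee)
  then have Fk: "ennreal \<rho> \<le> F k"
    by (subst (asm) ennreal_mult_le_mult_iff) auto
  have tgt: "jung d * (1 - 2 * e) * sqrt (2 * (sqrt e)\<^sup>2 * e) \<le> \<rho>"
    unfolding \<rho>_def by (rule real_part[OF e0 eh ratio])
  have se: "(sqrt e)\<^sup>2 = e" using e0 by simp
  show "\<exists>\<sigma>::real. \<exists>D D'. \<sigma> > 0 \<and>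
         distr_on d D \<and> finite_second_moments d D \<and> cov_le d D (\<sigma>\<^sup>2) \<and>
         distr_on d D' \<and> tv D D' \<le> e \<and>
         (\<integral>\<^sup>+ y. ennreal (vdist d y (mean d D)) \<partial>(A e (\<sigma>\<^sup>2) D'))
           \<ge> ennreal (jung d * (1 - 2 * e) * sqrt (2 * \<sigma>\<^sup>2 * e))"
  proof -
    have f1: "0 < sqrt e" using e0 by simp
    have f2: "distr_on d (DDk d m e k)" by (rule distr_k[OF m1 md e0 me])
    have f3: "finite_second_moments d (DDk d m e k)" by (rule fsm_k[OF m1 md e0 me])
    have f4: "cov_le d (DDk d m e k) ((sqrt e)\<^sup>2)" unfolding se by (rule cov_le_k[OF m1 md e0 me k])
    have f5: "distr_on d (DD0 d m e)" by (rule distr_0[OF m1 md e0 me])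
    have f6: "tv (DDk d m e k) (DD0 d m e) \<le> e" by (rule tv_k[OF m1 md e0 me])
    have "ennreal (jung d * (1 - 2 * e) * sqrt (2 * (sqrt e)\<^sup>2 * e)) \<le> ennreal \<rho>"
      by (rule ennreal_leI[OF tgt])
    also have "\<dots> \<le> F k" by (rule Fk)
    finally have f7: "ennreal (jung d * (1 - 2 * e) * sqrt (2 * (sqrt e)\<^sup>2 * e))
        \<le> (\<integral>\<^sup>+ y. ennreal (vdist d y (mean d (DDk d m e k))) \<partial>(A e ((sqrt e)\<^sup>2) (DD0 d m e)))"
      unfolding F_def Out_def .
    show ?thesis using f1 f2 f3 f4 f5 f6 f7 by blast
  qed
qed

end
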